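(* Let $G$ be a finite simple connected graph with exactly $h$ holes. Suppose that all the holes in $G$ are pairwise edge-disjoint, that $G$ has at most one non-edge maximal clique, and that the clique number satisfies $\omega(G)=h+1$. Let $K$ be a clique of $G$ with $|V(K)|=\omega(G)$. Then there exists an acyclic digraph $D$ such that $C(D)=G\cup\{i_1,i_2\}$, where $i_1,i_2$ are two new isolated vertices, and all vertices of $K$ have $i_2$ as a common out-neighbor in $D$. In particular, $k(G)\le 2$.
   Context: A hole of a graph is an induced (chordless) cycle of length at least $4$. A clique is a complete subgraph; a clique is non-edge if it has at least $3$ vertices. $\omega(G)$ is the maximum number of vertices of a clique in $G$. For a digraph $D=(V,A)$, its competition graph $C(D)$ has vertex set $V$, with distinct $x,y$ adjacent iff there is $v\in V$ with $(x,v),(y,v)\in A$. The competition number $k(G)$ is the smallest $k\ge 0$ such that $G$ together with $k$ new isolated vertices is the competition graph of an acyclic digraph. $G\cup\{i_1,i_2\}$ denotes the disjoint union of $G$ with two isolated vertices. *)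

theory Defs
  imports Main
begin

definition simple_graph :: "'a set \<Rightarrow> ('a \<Rightarrow> 'a \<Rightarrow> bool) \<Rightarrow> bool" where
  "simple_graph V E \<longleftrightarrow> finite V \<and> (\<forall>x y. E x y \<longrightarrow> x \<in> V \<and> y \<in> V \<and> x \<noteq> y \<and> E y x)"

definition connected_graph :: "'a set \<Rightarrow> ('a \<Rightarrow> 'a \<Rightarrow> bool) \<Rightarrow> bool" where
  "connected_graph V E \<longleftrightarrow> V \<noteq> {} \<and> (\<forall>x\<in>V. \<forall>y\<in>V. E\<^sup>*\<^sup>* x y)"

definition is_hole :: "'a set \<Rightarrow> ('a \<Rightarrow> 'a \<Rightarrow> bool) \<Rightarrow> 'a set \<Rightarrow> bool" where
  "is_hole V E S \<longleftrightarrow> S \<subseteq> V \<and> (\<exists>xs. distinct xs \<and> set xs = S \<and> length xs \<ge> 4 \<and>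
     (\<forall>i<length xs. \<forall>j<length xs.
        E (xs ! i) (xs ! j) \<longleftrightarrow> (j = Suc i mod length xs \<or> i = Suc j mod length xs)))"

definition holes :: "'a set \<Rightarrow> ('a \<Rightarrow> 'a \<Rightarrow> bool) \<Rightarrow> 'a set set" where
  "holes V E = {S. is_hole V E S}"

text \<open>Two holes are edge-disjoint if they share no edge (holes are induced, so the
  edges of a hole S are the edges of G with both ends in S).\<close>
definition edge_disjoint :: "('a \<Rightarrow> 'a \<Rightarrow> bool) \<Rightarrow> 'a set \<Rightarrow> 'a set \<Rightarrow> bool" where
  "edge_disjoint E S T \<longleftrightarrow> \<not> (\<exists>u v. u \<in> S \<inter> T \<and> v \<in> S \<inter> T \<and> E u v)"

definition is_clique :: "'a set \<Rightarrow> ('a \<Rightarrow> 'a \<Rightarrow> bool) \<Rightarrow> 'a set \<Rightarrow> bool" where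
  "is_clique V E K \<longleftrightarrow> K \<subseteq> V \<and> (\<forall>x\<in>K. \<forall>y\<in>K. x \<noteq> y \<longrightarrow> E x y)"

definition maximal_clique :: "'a set \<Rightarrow> ('a \<Rightarrow> 'a \<Rightarrow> bool) \<Rightarrow> 'a set \<Rightarrow> bool" where
  "maximal_clique V E K \<longleftrightarrow> is_clique V E K \<and> (\<forall>K'. is_clique V E K' \<and> K \<subseteq> K' \<longrightarrow> K' = K)"

definition nonedge_maximal_cliques :: "'a set \<Rightarrow> ('a \<Rightarrow> 'a \<Rightarrow> bool) \<Rightarrow> 'a set set" where
  "nonedge_maximal_cliques V E = {K. maximal_clique V E K \<and> card K \<ge> 3}"

definition clique_number :: "'a set \<Rightarrow> ('a \<Rightarrow> 'a \<Rightarrow> bool) \<Rightarrow> nat" where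
  "clique_number V E = Max {card K | K. is_clique V E K}"

definition is_competition_graph :: "'b set \<Rightarrow> ('b \<times> 'b) set \<Rightarrow> ('b \<Rightarrow> 'b \<Rightarrow> bool) \<Rightarrow> bool" where
  "is_competition_graph W A F \<longleftrightarrow> A \<subseteq> W \<times> W \<and>
     (\<forall>x\<in>W. \<forall>y\<in>W. x \<noteq> y \<longrightarrow> (F x y \<longleftrightarrow> (\<exists>v\<in>W. (x, v) \<in> A \<and> (y, v) \<in> A)))"

definition competition_number :: "'a set \<Rightarrow> ('a \<Rightarrow> 'a \<Rightarrow> bool) \<Rightarrow> nat" where
  "competition_number V E = (LEAST k. \<exists>A :: (('a + nat) \<times> ('a + nat)) set. acyclic A \<and>
     is_competition_graph (Inl ` V \<union> Inr ` {..<k}) A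
       (\<lambda>x y. case (x, y) of (Inl a, Inl b) \<Rightarrow> E a b | _ \<Rightarrow> False))"

end

theory Submission
  imports Defs
begin

definition gp :: "('a \<Rightarrow> 'a \<Rightarrow> bool) \<Rightarrow> 'a \<Rightarrow> 'a \<Rightarrow> 'a \<Rightarrow> 'a list \<Rightarrow> bool" where
  "gp E v a b p \<longleftrightarrow> p \<noteq> [] \<and> hd p = a \<and> last p = b \<and> successively E p \<and>
     (\<forall>z\<in>set p. z = a \<or> z = b \<or> (z \<noteq> v \<and> \<not> E v z))"

lemma gp_dup:
  assumes "gp E v a b (xs@[y]@ys@[y]@zs)"
  shows "gp E v a b (xs@[y]@zs)"
proof -
  have s: "successively E (xs@[y]@ys@[y]@zs)" using assms by (simp add: gp_def)
  have s1: "successively E (xs@[y])" using s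
    by (metis append_assoc successively_append_iff)
  have s2: "successively E (y#zs)" using s
    by (metis append_Cons append_Nil successively_append_iff)
  have "successively E (xs@[y]@zs)"
    using s1 s2 by (cases zs) (auto simp: successively_append_iff)
  moreover have "hd (xs@[y]@zs) = hd (xs@[y]@ys@[y]@zs)" by (cases xs) auto
  moreover have "last (xs@[y]@zs) = last (xs@[y]@ys@[y]@zs)" by (cases zs rule: rev_cases) auto
  ultimately show ?thesis using assms unfolding gp_def by auto
qed

lemma gp_chord:
  assumes "gp E v a b (xs@[x]@ys@[y]@zs)" "E x y"
  shows "gp E v a b (xs@[x,y]@zs)"
proof -
  have s: "successively E (xs@[x]@ys@[y]@zs)" using assms by (simp add: gp_def)
  have s1: "successively E (xs@[x])" using s
    by (metis append_assoc successively_append_iff)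
  have s2: "successively E (y#zs)" using s
    by (metis append_Cons append_Nil successively_append_iff)
  have "successively E (xs@[x,y]@zs)"
    using s1 s2 assms(2) by (cases zs) (auto simp: successively_append_iff)
  moreover have "hd (xs@[x,y]@zs) = hd (xs@[x]@ys@[y]@zs)" by (cases xs) auto
  moreover have "last (xs@[x,y]@zs) = last (xs@[x]@ys@[y]@zs)" by (cases zs rule: rev_cases) auto
  ultimately show ?thesis using assms unfolding gp_def by auto
qed


lemma decomp2:
  assumes "i < j" "j < length p"
  shows "p = take i p @ [p!i] @ take (j - Suc i) (drop (Suc i) p) @ [p!j] @ drop (Suc j) p"
proof -
  have 1: "p = take j p @ p!j # drop (Suc j) p" using assms(2) by (rule id_take_nth_drop)
  have "take j p = take i (take j p) @ (take j p)!i # drop (Suc i) (take j p)"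
    using assms by (intro id_take_nth_drop) simp
  also have "take i (take j p) = take i p" using assms by (simp add: min_def)
  also have "(take j p)!i = p!i" using assms by simp
  also have "drop (Suc i) (take j p) = take (j - Suc i) (drop (Suc i) p)" by (simp add: drop_take)
  finally have "take j p = take i p @ p!i # take (j - Suc i) (drop (Suc i) p)" .
  then show ?thesis using 1 by (metis append.assoc append_Cons append_Nil)
qed

lemma gp_min_exists:
  assumes "gp E v a b p"
  shows "\<exists>q. gp E v a b q \<and> (\<forall>q'. gp E v a b q' \<longrightarrow> length q \<le> length q')"
proof -
  let ?P = "\<lambda>n. \<exists>q. gp E v a b q \<and> length q = n"
  have ex: "?P (length p)" using assms by blast
  define m where "m = (LEAST n. ?P n)"
  have "?P m" unfolding m_def using ex by (rule LeastI)
  then obtain q where q: "gp E v a b q" "length q = m" by blast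
  have "\<forall>q'. gp E v a b q' \<longrightarrow> length q \<le> length q'"
    using q(2) unfolding m_def by (auto intro: Least_le)
  then show ?thesis using q by blast
qed

lemma gp_min_distinct:
  assumes "gp E v a b q" "\<forall>q'. gp E v a b q' \<longrightarrow> length q \<le> length q'"
  shows "distinct q"
proof (rule ccontr)
  assume "\<not> distinct q"
  then obtain xs ys zs y where d: "q = xs@[y]@ys@[y]@zs" using not_distinct_decomp by blast
  then have "gp E v a b (xs@[y]@zs)" using assms(1) gp_dup by metis
  then have "length q \<le> length (xs@[y]@zs)" using assms(2) by blast
  then show False using d by simp
qed

lemma gp_min_nochord:
  assumes "gp E v a b q" "\<forall>q'. gp E v a b q' \<longrightarrow> length q \<le> length q'"
    "Suc i < j" "j < length q"
  shows "\<not> E (q!i) (q!j)"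
proof
  assume e: "E (q!i) (q!j)"
  have d: "q = take i q @ [q!i] @ take (j - Suc i) (drop (Suc i) q) @ [q!j] @ drop (Suc j) q"
    using assms(3,4) by (intro decomp2) auto
  have "gp E v a b (take i q @ [q!i, q!j] @ drop (Suc j) q)"
    using gp_chord[of E v a b "take i q" "q!i" _ "q!j" "drop (Suc j) q"] d assms(1) e by metis
  then have "length q \<le> length (take i q @ [q!i, q!j] @ drop (Suc j) q)" using assms(2) by blast
  then show False using assms(3,4) by simp
qed


lemma sg_sym: "simple_graph V E \<Longrightarrow> E x y \<Longrightarrow> E y x"
  unfolding simple_graph_def by blast
lemma sg_irr: "simple_graph V E \<Longrightarrow> \<not> E x x"
  unfolding simple_graph_def by blast
lemma sg_V: "simple_graph V E \<Longrightarrow> E x y \<Longrightarrow> x \<in> V \<and> y \<in> V"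
  unfolding simple_graph_def by blast

lemma hole_from_gp:
  assumes sg: "simple_graph V E" and va: "E v a" and vb: "E v b" and ab: "a \<noteq> b" "\<not> E a b"
    and g: "gp E v a b p"
  shows "\<exists>S. is_hole V E S \<and> v \<in> S \<and> a \<in> S \<and> b \<in> S \<and> (\<forall>c\<in>S. E v c \<longrightarrow> c = a \<or> c = b)"
proof -
  obtain q where q: "gp E v a b q" and qm: "\<forall>q'. gp E v a b q' \<longrightarrow> length q \<le> length q'"
    using gp_min_exists[OF g] by blast
  have dq: "distinct q" using gp_min_distinct[OF q qm] .
  have nc: "\<And>i j. Suc i < j \<Longrightarrow> j < length q \<Longrightarrow> \<not> E (q!i) (q!j)"
    using gp_min_nochord[OF q qm] by blast
  have qne: "q \<noteq> []" and hq: "hd q = a" and lq: "last q = b" and sq: "successively E q"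
    and zq: "\<forall>z\<in>set q. z = a \<or> z = b \<or> (z \<noteq> v \<and> \<not> E v z)"
    using q unfolding gp_def by auto
  define n where "n = length q"
  have q0: "q!0 = a" using hq qne by (simp add: hd_conv_nth)
  have qn: "q!(n-1) = b" using lq qne by (simp add: last_conv_nth n_def)
  have n2: "n \<ge> 2"
  proof (rule ccontr)
    assume "\<not> n \<ge> 2"
    have "n \<ge> 1" using qne n_def by (cases q) auto
    then have "n = 1" using \<open>\<not> n \<ge> 2\<close> by arith
    then show False using q0 qn ab by simp
  qed
  have n3: "n \<ge> 3"
  proof (rule ccontr)
    assume "\<not> n \<ge> 3"
    then have "n = 2" using n2 by simp
    then have "E (q!0) (q!1)" using successively_nth[OF sq, of 0] n_def by simp
    then show False using q0 qn \<open>n = 2\<close> ab by simp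
  qed
  have ind: "\<And>i j. i < n \<Longrightarrow> j < n \<Longrightarrow> E (q!i) (q!j) \<longleftrightarrow> (j = Suc i \<or> i = Suc j)"
  proof -
    fix i j assume ij: "i < n" "j < n"
    show "E (q!i) (q!j) \<longleftrightarrow> (j = Suc i \<or> i = Suc j)"
    proof
      assume e: "E (q!i) (q!j)"
      have "i \<noteq> j" using e sg_irr[OF sg] by auto
      show "j = Suc i \<or> i = Suc j"
      proof (rule ccontr)
        assume "\<not> (j = Suc i \<or> i = Suc j)"
        then have "Suc i < j \<or> Suc j < i" using \<open>i \<noteq> j\<close> by auto
        then show False
        proof
          assume "Suc i < j" then show False using nc[of i j] e ij n_def by simp
        next
          assume "Suc j < i" then show False using nc[of j i] sg_sym[OF sg e] ij n_def by simp
        qed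
      qed
    next
      assume "j = Suc i \<or> i = Suc j"
      then show "E (q!i) (q!j)"
      proof
        assume "j = Suc i" then show ?thesis using successively_nth[OF sq, of i] ij n_def by simp
      next
        assume "i = Suc j" then show ?thesis using successively_nth[OF sq, of j] ij n_def sg_sym[OF sg] by simp
      qed
    qed
  qed
  have vq: "\<And>k. k < n \<Longrightarrow> E v (q!k) \<longleftrightarrow> (k = 0 \<or> k = n - 1)"
  proof -
    fix k assume k: "k < n"
    have mem: "q!k \<in> set q" using k n_def by simp
    show "E v (q!k) \<longleftrightarrow> (k = 0 \<or> k = n - 1)"
    proof
      assume e: "E v (q!k)"
      then have "q!k = a \<or> q!k = b" using zq mem by blast
      then show "k = 0 \<or> k = n - 1"
      proof
        assume "q!k = a" then have "q!k = q!0" using q0 by simp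
        then show ?thesis using dq k n_def nth_eq_iff_index_eq n2 by fastforce
      next
        assume "q!k = b" then have "q!k = q!(n-1)" using qn by simp
        then show ?thesis using dq k n_def nth_eq_iff_index_eq n2 by fastforce
      qed
    next
      assume "k = 0 \<or> k = n - 1" then show "E v (q!k)" using q0 qn va vb by auto
    qed
  qed
  have vnq: "v \<notin> set q"
  proof
    assume "v \<in> set q"
    then have "v = a \<or> v = b \<or> (v \<noteq> v \<and> \<not> E v v)" using zq by blast
    then show False using va vb sg_irr[OF sg] by auto
  qed
  have qV: "set q \<subseteq> V"
  proof
    fix z assume "z \<in> set q"
    then obtain k where k: "k < n" "q!k = z" using n_def by (auto simp: in_set_conv_nth)
    have "E v (q!k) \<or> E (q!k) (q!(Suc k)) \<or> E (q!k) (q!(k-1))"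
    proof (cases "k = 0")
      case True then show ?thesis using vq k by blast
    next
      case False
      then have "E (q!k) (q!(k-1))" using ind[of k "k-1"] k by simp
      then show ?thesis by blast
    qed
    then show "z \<in> V" using k sg_V[OF sg] by blast
  qed
  define xs where "xs = v # q"
  have lxs: "length xs = Suc n" using xs_def n_def by simp
  have dxs: "distinct xs" using xs_def dq vnq by simp
  have vV: "v \<in> V" using sg_V[OF sg va] by simp
  have hole_cond: "\<forall>i<length xs. \<forall>j<length xs.
        E (xs ! i) (xs ! j) \<longleftrightarrow> (j = Suc i mod length xs \<or> i = Suc j mod length xs)"
  proof (intro allI impI)
    fix i j assume i: "i < length xs" and j: "j < length xs"
    show "E (xs ! i) (xs ! j) \<longleftrightarrow> (j = Suc i mod length xs \<or> i = Suc j mod length xs)"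
    proof (cases "i = 0")
      case True
      note i0 = True
      show ?thesis
      proof (cases "j = 0")
        case True then show ?thesis using i0 lxs n3 sg_irr[OF sg] by simp
      next
        case False
        then obtain k where jk: "j = Suc k" by (cases j) auto
        have "E (xs!i) (xs!j) \<longleftrightarrow> (k = 0 \<or> k = n - 1)" using vq[of k] i0 jk j lxs xs_def by simp
        moreover have "Suc i mod length xs = 1" using i0 lxs n3 by simp
        moreover have "(Suc j mod length xs = 0) \<longleftrightarrow> k = n - 1" using jk j lxs n3
          by (auto simp: mod_if)
        ultimately show ?thesis using i0 jk n3 by auto
      qed
    next
      case False
      then obtain k where ik: "i = Suc k" by (cases i) auto
      show ?thesis
      proof (cases "j = 0")
        case True
        have "E (xs!i) (xs!j) \<longleftrightarrow> (k = 0 \<or> k = n - 1)" using vq[of k] True ik i lxs xs_def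
          sg_sym[OF sg] by auto
        moreover have "Suc j mod length xs = 1" using True lxs n3 by simp
        moreover have "(Suc i mod length xs = 0) \<longleftrightarrow> k = n - 1" using ik i lxs n3
          by (auto simp: mod_if)
        ultimately show ?thesis using True ik n3 by auto
      next
        case False
        then obtain l where jl: "j = Suc l" by (cases j) auto
        have ki: "k < n" "l < n" using ik jl i j lxs by auto
        have e: "E (xs!i) (xs!j) \<longleftrightarrow> (l = Suc k \<or> k = Suc l)" using ind[of k l] ik jl ki xs_def by simp
        have m1: "Suc i mod length xs = (if k = n - 1 then 0 else Suc i)" using i ik lxs by auto
        have m2: "Suc j mod length xs = (if l = n - 1 then 0 else Suc j)" using j jl lxs by auto
        show ?thesis unfolding m1 m2 e using ik jl ki by auto
      qed
    qed
  qed
  have "is_hole V E (set xs)"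
    unfolding is_hole_def
  proof (intro conjI exI[of _ xs])
    show "set xs \<subseteq> V" using qV vV xs_def by auto
  qed (use hole_cond dxs lxs n3 in auto)
  moreover have "\<forall>c\<in>set xs. E v c \<longrightarrow> c = a \<or> c = b"
    using xs_def zq sg_irr[OF sg] by auto
  moreover have "a \<in> set xs" "b \<in> set xs" using xs_def hq lq qne hd_in_set last_in_set by auto
  ultimately show ?thesis using xs_def by auto
qed


definition Wk :: "('a \<Rightarrow> 'a \<Rightarrow> bool) \<Rightarrow> 'a \<Rightarrow> 'a \<Rightarrow> 'a \<Rightarrow> bool" where
  "Wk E v w y \<longleftrightarrow> w \<noteq> v \<and> (\<exists>p. p \<noteq> [] \<and> hd p = w \<and> last p = y \<and> successively E p \<and>
      (\<forall>z\<in>set (tl p). z \<noteq> v \<and> \<not> E v z))"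

definition linked :: "('a \<Rightarrow> 'a \<Rightarrow> bool) \<Rightarrow> 'a \<Rightarrow> 'a \<Rightarrow> 'a \<Rightarrow> bool" where
  "linked E v w z \<longleftrightarrow> E v w \<and> E v z \<and> w \<noteq> z \<and> (\<exists>p. gp E v w z p)"

lemma Wk_refl: "w \<noteq> v \<Longrightarrow> Wk E v w w"
  unfolding Wk_def by (intro conjI exI[of _ "[w]"]) auto

lemma Wk_snoc:
  assumes "Wk E v w y" "E y z" "z \<noteq> v" "\<not> E v z"
  shows "Wk E v w z"
proof -
  obtain p where p: "w \<noteq> v" "p \<noteq> []" "hd p = w" "last p = y" "successively E p"
    "\<forall>z\<in>set (tl p). z \<noteq> v \<and> \<not> E v z" using assms(1) unfolding Wk_def by blast
  have "successively E (p @ [z])" using p(2,4,5) assms(2) by (auto simp: successively_append_iff)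
  moreover have "set (tl (p@[z])) \<subseteq> set (tl p) \<union> {z}" using p(2) by (cases p) auto
  ultimately show ?thesis unfolding Wk_def using p assms
    by (intro conjI exI[of _ "p@[z]"]) (auto simp: hd_append)
qed

lemma Wk_linked:
  assumes "Wk E v w y" "E y z" "E v z" "E v w" "z \<noteq> w"
  shows "linked E v w z"
proof -
  obtain p where p: "w \<noteq> v" "p \<noteq> []" "hd p = w" "last p = y" "successively E p"
    "\<forall>z\<in>set (tl p). z \<noteq> v \<and> \<not> E v z" using assms(1) unfolding Wk_def by blast
  have "successively E (p @ [z])" using p(2,4,5) assms(2) by (auto simp: successively_append_iff)
  moreover have "set (p@[z]) \<subseteq> {w} \<union> set (tl p) \<union> {z}" using p(2,3) by (cases p) auto
  ultimately have "gp E v w z (p@[z])" unfolding gp_def using p by (auto simp: hd_append)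
  then show ?thesis unfolding linked_def using assms by blast
qed

lemma linked_sym:
  assumes sg: "simple_graph V E" and l: "linked E v w z" shows "linked E v z w"
proof -
  obtain p where p: "gp E v w z p" and l2: "E v w" "E v z" "w \<noteq> z" using l unfolding linked_def by blast
  have "successively E (rev p)" using p sg_sym[OF sg] unfolding gp_def
    by (auto simp: successively_rev elim: successively_mono)
  then have "gp E v z w (rev p)" using p unfolding gp_def by (auto simp: hd_rev last_rev)
  then show ?thesis using l2 unfolding linked_def by blast
qed

lemma linked_hole:
  assumes sg: "simple_graph V E" and ind: "\<forall>a b. E v a \<longrightarrow> E v b \<longrightarrow> \<not> E a b"
    and l: "linked E v w z"
  shows "\<exists>S. is_hole V E S \<and> v \<in> S \<and> w \<in> S \<and> z \<in> S \<and> (\<forall>c\<in>S. E v c \<longrightarrow> c = w \<or> c = z)"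
proof -
  obtain p where "E v w" "E v z" "w \<noteq> z" "gp E v w z p" using l unfolding linked_def by blast
  moreover have "\<not> E w z" using ind \<open>E v w\<close> \<open>E v z\<close> by blast
  ultimately show ?thesis using hole_from_gp[OF sg] by blast
qed

lemma linked_unique:
  assumes sg: "simple_graph V E" and ind: "\<forall>a b. E v a \<longrightarrow> E v b \<longrightarrow> \<not> E a b"
    and ed: "\<forall>S\<in>holes V E. \<forall>T\<in>holes V E. S \<noteq> T \<longrightarrow> edge_disjoint E S T"
    and l1: "linked E v a b" and l2: "linked E v a c"
  shows "b = c"
proof (rule ccontr)
  assume bc: "b \<noteq> c"
  obtain S1 where S1: "is_hole V E S1" "v \<in> S1" "a \<in> S1" "b \<in> S1" "\<forall>x\<in>S1. E v x \<longrightarrow> x = a \<or> x = b"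
    using linked_hole[OF sg ind l1] by blast
  obtain S2 where S2: "is_hole V E S2" "v \<in> S2" "a \<in> S2" "c \<in> S2"
    using linked_hole[OF sg ind l2] by blast
  have "E v c" "c \<noteq> a" using l2 unfolding linked_def by auto
  then have "c \<notin> S1" using S1(5) bc by blast
  then have "S1 \<noteq> S2" using S2(4) by blast
  then have "edge_disjoint E S1 S2" using ed S1(1) S2(1) unfolding holes_def by blast
  moreover have "E v a" using l1 unfolding linked_def by simp
  ultimately show False using S1 S2 unfolding edge_disjoint_def by blast
qed

lemma propagate:
  assumes sg: "simple_graph V E" and ind: "\<forall>a b. E v a \<longrightarrow> E v b \<longrightarrow> \<not> E a b"
    and ed: "\<forall>S\<in>holes V E. \<forall>T\<in>holes V E. S \<noteq> T \<longrightarrow> edge_disjoint E S T"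
    and va: "E v a"
    and r: "(\<lambda>x y. E x y \<and> x \<noteq> v \<and> y \<noteq> v)\<^sup>*\<^sup>* a y"
  shows "\<exists>w. (w = a \<or> linked E v a w) \<and> Wk E v w y"
  using r
proof (induction rule: rtranclp_induct)
  case base
  have "a \<noteq> v" using va sg_irr[OF sg] by auto
  then have "Wk E v a a" by (rule Wk_refl)
  then show ?case by blast
next
  case (step y z)
  obtain w where w: "w = a \<or> linked E v a w" "Wk E v w y" using step.IH by blast
  have ez: "E y z" "z \<noteq> v" using step.hyps(2) by auto
  have vw: "E v w" using w(1) va unfolding linked_def by auto
  show ?case
  proof (cases "E v z")
    case False
    then show ?thesis using Wk_snoc[OF w(2) ez(1) ez(2) False] w(1) by blast
  next
    case True
    show ?thesis
    proof (cases "z = w")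
      case True then show ?thesis using w(1) Wk_refl[OF ez(2)] by blast
    next
      case False
      have lwz: "linked E v w z" using Wk_linked[OF w(2) ez(1) True vw False] .
      from w(1) show ?thesis
      proof
        assume "w = a" then show ?thesis using lwz Wk_refl[OF ez(2)] by blast
      next
        assume law: "linked E v a w"
        have "a = z" using linked_unique[OF sg ind ed linked_sym[OF sg law] lwz] .
        then show ?thesis using Wk_refl[OF ez(2)] by blast
      qed
    qed
  qed
qed

lemma Wk_nbr: assumes "Wk E v w c" "E v c" shows "c = w"
proof -
  obtain p where p: "p \<noteq> []" "hd p = w" "last p = c"
    "\<forall>z\<in>set (tl p). z \<noteq> v \<and> \<not> E v z" using assms(1) unfolding Wk_def by blast
  show ?thesis
  proof (cases "tl p = []")
    case True then show ?thesis using p by (cases p) auto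
  next
    case False
    then have "last p \<in> set (tl p)" using p(1) by (cases p) auto
    then show ?thesis using p assms(2) by blast
  qed
qed

lemma deg_bound:
  assumes sg: "simple_graph V E" and vV: "v \<in> V"
    and ind: "\<forall>a b. E v a \<longrightarrow> E v b \<longrightarrow> \<not> E a b"
    and ed: "\<forall>S\<in>holes V E. \<forall>T\<in>holes V E. S \<noteq> T \<longrightarrow> edge_disjoint E S T"
    and conn: "\<forall>x\<in>V-{v}. \<forall>y\<in>V-{v}. (\<lambda>x y. E x y \<and> x \<noteq> v \<and> y \<noteq> v)\<^sup>*\<^sup>* x y"
  shows "card {y. E v y} \<le> 1 + card {S \<in> holes V E. v \<in> S}"
proof (cases "card {y. E v y} \<le> 1")
  case True then show ?thesis by simp
next
  case False
  have finV: "finite V" using sg unfolding simple_graph_def by simp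
  have finN: "finite {y. E v y}" using finV sg_V[OF sg] by (auto intro: finite_subset)
  obtain a b where ab: "E v a" "E v b" "a \<noteq> b"
  proof -
    from False have "\<exists>a b. a \<in> {y. E v y} \<and> b \<in> {y. E v y} \<and> a \<noteq> b"
      by (metis One_nat_def card_le_Suc0_iff_eq finN not_less_eq_eq)
    then show ?thesis using that by blast
  qed
  have reach: "\<And>c. E v c \<Longrightarrow> c \<noteq> a \<Longrightarrow> linked E v a c"
  proof -
    fix c assume c: "E v c" "c \<noteq> a"
    have "a \<in> V - {v}" "c \<in> V - {v}" using ab c sg_V[OF sg] sg_irr[OF sg] by auto
    then have "(\<lambda>x y. E x y \<and> x \<noteq> v \<and> y \<noteq> v)\<^sup>*\<^sup>* a c" using conn by blast
    then obtain w where "w = a \<or> linked E v a w" "Wk E v w c" using propagate[OF sg ind ed ab(1)] by blast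
    moreover have "c = w" using Wk_nbr[OF \<open>Wk E v w c\<close> c(1)] .
    ultimately show "linked E v a c" using c by blast
  qed
  have lab: "linked E v a b" using reach ab by blast
  have "{y. E v y} \<subseteq> {a, b}"
  proof
    fix c assume "c \<in> {y. E v y}"
    then have "E v c" by simp
    show "c \<in> {a, b}"
    proof (cases "c = a")
      case False
      then have "linked E v a c" using reach \<open>E v c\<close> by blast
      then have "b = c" using linked_unique[OF sg ind ed lab] by blast
      then show ?thesis by simp
    qed simp
  qed
  then have c2: "card {y. E v y} \<le> 2" by (metis card_2_iff card_mono finite.emptyI finite_insert ab(3))
  obtain S where S: "is_hole V E S" "v \<in> S" using linked_hole[OF sg ind lab] by blast
  have "finite (holes V E)"
  proof -
    have "holes V E \<subseteq> Pow V" unfolding holes_def is_hole_def by auto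
    then show ?thesis using finV by (auto intro: finite_subset)
  qed
  then have "finite {S \<in> holes V E. v \<in> S}" by simp
  moreover have "S \<in> {S \<in> holes V E. v \<in> S}" using S unfolding holes_def by simp
  ultimately have "card {S \<in> holes V E. v \<in> S} \<ge> 1"
    by (metis One_nat_def Suc_leI card_gt_0_iff empty_iff)
  then show ?thesis using c2 by simp
qed


definition ec :: "('a \<Rightarrow> 'a \<Rightarrow> bool) \<Rightarrow> 'a set \<Rightarrow> nat" where
  "ec H R = card {(x,y). x \<in> R \<and> y \<in> R \<and> H x y}"

definition dg :: "('a \<Rightarrow> 'a \<Rightarrow> bool) \<Rightarrow> 'a set \<Rightarrow> 'a \<Rightarrow> nat" where
  "dg H R v = card {y \<in> R. H v y}"

lemma ec_sum: assumes "finite R" shows "ec H R = (\<Sum>x\<in>R. dg H R x)"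
proof -
  have "{(x,y). x \<in> R \<and> y \<in> R \<and> H x y} = Sigma R (\<lambda>x. {y \<in> R. H x y})" by auto
  then show ?thesis unfolding ec_def dg_def using assms by simp
qed

lemma ec_remove:
  assumes fin: "finite R" and vR: "v \<in> R" and sym: "\<And>x y. H x y \<Longrightarrow> H y x" and irr: "\<And>x. \<not> H x x"
  shows "ec H R = ec H (R - {v}) + 2 * dg H R v"
proof -
  let ?A = "{(x,y). x \<in> R - {v} \<and> y \<in> R - {v} \<and> H x y}"
  let ?B = "Pair v ` {y \<in> R. H v y}"
  let ?C = "(\<lambda>y. (y, v)) ` {y \<in> R. H v y}"
  have eq: "{(x,y). x \<in> R \<and> y \<in> R \<and> H x y} = ?A \<union> ?B \<union> ?C"
    using vR sym by auto
  have fA: "finite ?A" using fin by (auto intro: finite_subset[of _ "R \<times> R"])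
  have fB: "finite ?B" "finite ?C" using fin by auto
  have d1: "?A \<inter> ?B = {}" "?A \<inter> ?C = {}" by auto
  have d2: "?B \<inter> ?C = {}" using irr by auto
  have cB: "card ?B = dg H R v" unfolding dg_def by (simp add: card_image inj_on_def)
  have cC: "card ?C = dg H R v" unfolding dg_def by (simp add: card_image inj_on_def)
  have "card (?A \<union> ?B \<union> ?C) = card ?A + card ?B + card ?C"
    using fA fB d1 d2 by (simp add: card_Un_disjoint Int_Un_distrib2)
  then show ?thesis unfolding ec_def using eq cB cC by simp
qed

lemma rtranclp_sym:
  assumes sym: "\<And>x y. r x y \<Longrightarrow> r y x" and "r\<^sup>*\<^sup>* x y" shows "r\<^sup>*\<^sup>* y x"
  using assms(2)
proof (induction rule: rtranclp_induct)
  case base then show ?case by simp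
next
  case (step y z)
  then show ?case using sym by (meson converse_rtranclp_into_rtranclp)
qed

lemma hole_restrict:
  assumes sg: "simple_graph V E"
  shows "is_hole (V - {v}) (\<lambda>x y. E x y \<and> x \<noteq> v \<and> y \<noteq> v) S \<longleftrightarrow> is_hole V E S \<and> v \<notin> S"
proof
  assume h: "is_hole (V - {v}) (\<lambda>x y. E x y \<and> x \<noteq> v \<and> y \<noteq> v) S"
  then obtain xs where xs: "S \<subseteq> V - {v}" "distinct xs" "set xs = S" "length xs \<ge> 4"
    "\<forall>i<length xs. \<forall>j<length xs. (E (xs!i) (xs!j) \<and> xs!i \<noteq> v \<and> xs!j \<noteq> v) \<longleftrightarrow>
        (j = Suc i mod length xs \<or> i = Suc j mod length xs)"
    unfolding is_hole_def by blast
  have "\<forall>i<length xs. xs!i \<noteq> v" using xs(1,3) nth_mem by blast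
  then show "is_hole V E S \<and> v \<notin> S" unfolding is_hole_def using xs by auto
next
  assume h: "is_hole V E S \<and> v \<notin> S"
  then obtain xs where xs: "S \<subseteq> V" "distinct xs" "set xs = S" "length xs \<ge> 4"
    "\<forall>i<length xs. \<forall>j<length xs. E (xs!i) (xs!j) \<longleftrightarrow>
        (j = Suc i mod length xs \<or> i = Suc j mod length xs)"
    unfolding is_hole_def by blast
  have "\<forall>i<length xs. xs!i \<noteq> v" using xs(3) h nth_mem by blast
  then show "is_hole (V - {v}) (\<lambda>x y. E x y \<and> x \<noteq> v \<and> y \<noteq> v) S"
    unfolding is_hole_def using xs h by (intro conjI exI[of _ xs]) auto
qed

lemma far_vertex:
  assumes fin: "finite V" and ne: "V - K \<noteq> {}" and Kne: "K \<noteq> {}" and cl: "is_clique V E K"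
    and sym: "\<And>x y. E x y \<Longrightarrow> E y x" and EV: "\<And>x y. E x y \<Longrightarrow> x \<in> V \<and> y \<in> V"
    and conn: "\<forall>x\<in>V. \<forall>y\<in>V. E\<^sup>*\<^sup>* x y"
  shows "\<exists>v\<in>V-K. \<forall>x\<in>V-{v}. \<forall>y\<in>V-{v}. (\<lambda>x y. E x y \<and> x \<noteq> v \<and> y \<noteq> v)\<^sup>*\<^sup>* x y"
proof -
  have KV: "K \<subseteq> V" using cl unfolding is_clique_def by simp
  define d where "d u = (LEAST n. \<exists>k\<in>K. (E ^^ n) u k)" for u
  have dex: "\<And>u. u \<in> V \<Longrightarrow> \<exists>k\<in>K. (E ^^ d u) u k"
  proof -
    fix u assume u: "u \<in> V"
    obtain k0 where k0: "k0 \<in> K" using Kne by blast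
    then have "E\<^sup>*\<^sup>* u k0" using conn u KV by blast
    then obtain n where "(E ^^ n) u k0" using rtranclp_imp_relpowp by metis
    then have "\<exists>n. \<exists>k\<in>K. (E ^^ n) u k" using k0 by blast
    then show "\<exists>k\<in>K. (E ^^ d u) u k" unfolding d_def by (rule LeastI_ex)
  qed
  have dle: "\<And>u n k. k \<in> K \<Longrightarrow> (E ^^ n) u k \<Longrightarrow> d u \<le> n"
    unfolding d_def by (auto intro: Least_le)
  obtain v where v: "v \<in> V - K" "\<forall>u\<in>V-K. d u \<le> d v"
  proof -
    have "finite (d ` (V - K))" using fin by simp
    moreover have "d ` (V - K) \<noteq> {}" using ne by simp
    ultimately have "Max (d ` (V - K)) \<in> d ` (V - K)" by (rule Max_in)
    then obtain v where "v \<in> V - K" "d v = Max (d ` (V - K))" by auto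
    moreover have "\<forall>u\<in>V-K. d u \<le> Max (d ` (V - K))" using fin by simp
    ultimately show ?thesis using that by auto
  qed
  let ?E' = "\<lambda>x y. E x y \<and> x \<noteq> v \<and> y \<noteq> v"
  have toK: "\<And>n u. u \<in> V - {v} \<Longrightarrow> d u = n \<Longrightarrow> \<exists>k\<in>K. ?E'\<^sup>*\<^sup>* u k"
  proof -
    fix n
    show "\<And>u. u \<in> V - {v} \<Longrightarrow> d u = n \<Longrightarrow> \<exists>k\<in>K. ?E'\<^sup>*\<^sup>* u k"
    proof (induction n rule: less_induct)
      case (less n u)
      show ?case
      proof (cases "u \<in> K")
        case True then show ?thesis by blast
      next
        case False
        obtain k where k: "k \<in> K" "(E ^^ n) u k" using dex less.prems by auto
        have "n \<noteq> 0" using k False by (cases "n = 0") auto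
        then obtain m where m: "n = Suc m" by (cases n) auto
        obtain w where w: "E u w" "(E ^^ m) w k" using relpowp_Suc_D2 k(2) m by metis
        have dw: "d w \<le> m" using dle[OF k(1) w(2)] .
        have wV: "w \<in> V" using EV w(1) by blast
        have wv: "w \<noteq> v"
        proof
          assume "w = v"
          then have "d v \<le> m" using dw by simp
          moreover have "d u \<le> d v" using v(2) less.prems False by auto
          ultimately show False using less.prems m by simp
        qed
        obtain k' where k': "k' \<in> K" "?E'\<^sup>*\<^sup>* w k'"
          using less.IH[of "d w" w] dw m wV wv by auto
        have "?E' u w" using w(1) wv less.prems by auto
        then have "?E'\<^sup>*\<^sup>* u k'" using k'(2) by (rule converse_rtranclp_into_rtranclp)
        then show ?thesis using k'(1) by blast
      qed
    qed
  qed
  have symE': "\<And>x y. ?E' x y \<Longrightarrow> ?E' y x" using sym by blast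
  have "\<forall>x\<in>V-{v}. \<forall>y\<in>V-{v}. ?E'\<^sup>*\<^sup>* x y"
  proof (intro ballI)
    fix x y assume x: "x \<in> V - {v}" and y: "y \<in> V - {v}"
    obtain k1 where k1: "k1 \<in> K" "?E'\<^sup>*\<^sup>* x k1" using toK x by blast
    obtain k2 where k2: "k2 \<in> K" "?E'\<^sup>*\<^sup>* y k2" using toK y by blast
    have "?E'\<^sup>*\<^sup>* k1 k2"
    proof (cases "k1 = k2")
      case False
      then have "E k1 k2" using cl k1 k2 unfolding is_clique_def by blast
      then have "?E' k1 k2" using k1 k2 v(1) by auto
      then show ?thesis by blast
    qed simp
    moreover have "?E'\<^sup>*\<^sup>* k2 y" using rtranclp_sym[OF symE' k2(2)] .
    ultimately show "?E'\<^sup>*\<^sup>* x y" using k1(2) by (meson rtranclp_trans)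
  qed
  then show ?thesis using v(1) by blast
qed


lemma finite_holes: "finite V \<Longrightarrow> finite (holes V E)"
proof -
  assume "finite V"
  moreover have "holes V E \<subseteq> Pow V" unfolding holes_def is_hole_def by auto
  ultimately show ?thesis by (auto intro: finite_subset)
qed

lemma countA:
  fixes K :: "'a set"
  shows "\<forall>V E. card (V - K) = m \<longrightarrow> simple_graph V E \<longrightarrow> (\<forall>x\<in>V. \<forall>y\<in>V. E\<^sup>*\<^sup>* x y) \<longrightarrow>
    is_clique V E K \<longrightarrow> K \<noteq> {} \<longrightarrow> (\<forall>x y z. E x y \<longrightarrow> E y z \<longrightarrow> E x z \<longrightarrow> x \<in> K) \<longrightarrow>
    (\<forall>S\<in>holes V E. \<forall>T\<in>holes V E. S \<noteq> T \<longrightarrow> edge_disjoint E S T) \<longrightarrow>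
    ec (\<lambda>x y. E x y \<and> \<not>(x \<in> K \<and> y \<in> K)) V + 2 * card K \<le> 2 * card V + 2 * card (holes V E)"
proof (induction m)
  case 0
  show ?case
  proof (intro allI impI)
    fix V :: "'a set" and E
    assume c: "card (V - K) = 0" and sg: "simple_graph V E" and cl: "is_clique V E K"
    have fin: "finite V" using sg unfolding simple_graph_def by simp
    have KV: "K \<subseteq> V" using cl unfolding is_clique_def by simp
    have "V - K = {}" using c fin by simp
    then have VK: "V = K" using KV by auto
    have emp: "{(x,y). x \<in> V \<and> y \<in> V \<and> E x y \<and> \<not>(x \<in> K \<and> y \<in> K)} = {}" using VK by auto
    then show "ec (\<lambda>x y. E x y \<and> \<not>(x \<in> K \<and> y \<in> K)) V + 2 * card K \<le> 2 * card V + 2 * card (holes V E)"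
      unfolding ec_def emp using VK by simp
  qed
next
  case (Suc m)
  show ?case
  proof (intro allI impI)
    fix V :: "'a set" and E
    assume c: "card (V - K) = Suc m" and sg: "simple_graph V E" and conn: "\<forall>x\<in>V. \<forall>y\<in>V. E\<^sup>*\<^sup>* x y"
      and cl: "is_clique V E K" and Kne: "K \<noteq> {}" and tri: "\<forall>x y z. E x y \<longrightarrow> E y z \<longrightarrow> E x z \<longrightarrow> x \<in> K"
      and ed: "\<forall>S\<in>holes V E. \<forall>T\<in>holes V E. S \<noteq> T \<longrightarrow> edge_disjoint E S T"
    have fin: "finite V" using sg unfolding simple_graph_def by simp
    have KV: "K \<subseteq> V" using cl unfolding is_clique_def by simp
    have ne: "V - K \<noteq> {}" using c by (metis card.empty nat.distinct(1))
    obtain v where v: "v \<in> V - K" and conn': "\<forall>x\<in>V-{v}. \<forall>y\<in>V-{v}. (\<lambda>x y. E x y \<and> x \<noteq> v \<and> y \<noteq> v)\<^sup>*\<^sup>* x y"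
      using far_vertex[OF fin ne Kne cl sg_sym[OF sg] sg_V[OF sg] conn] by blast
    define V' where "V' = V - {v}"
    define E' where "E' = (\<lambda>x y. E x y \<and> x \<noteq> v \<and> y \<noteq> v)"
    have c': "card (V' - K) = m" using c v fin unfolding V'_def
      by (metis Diff_insert Diff_insert2 card_Diff_singleton diff_Suc_1 finite_Diff)
    have sg': "simple_graph V' E'" using sg unfolding simple_graph_def V'_def E'_def by auto
    have conn'': "\<forall>x\<in>V'. \<forall>y\<in>V'. E'\<^sup>*\<^sup>* x y" using conn' unfolding V'_def E'_def by simp
    have cl': "is_clique V' E' K" using cl v unfolding is_clique_def V'_def E'_def by auto
    have tri': "\<forall>x y z. E' x y \<longrightarrow> E' y z \<longrightarrow> E' x z \<longrightarrow> x \<in> K" using tri unfolding E'_def by blast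
    have hr: "\<And>S. S \<in> holes V' E' \<longleftrightarrow> S \<in> holes V E \<and> v \<notin> S"
      using hole_restrict[OF sg] unfolding holes_def V'_def E'_def by auto
    have ed': "\<forall>S\<in>holes V' E'. \<forall>T\<in>holes V' E'. S \<noteq> T \<longrightarrow> edge_disjoint E' S T"
      using ed hr unfolding edge_disjoint_def E'_def by blast
    have IH: "ec (\<lambda>x y. E' x y \<and> \<not>(x \<in> K \<and> y \<in> K)) V' + 2 * card K \<le> 2 * card V' + 2 * card (holes V' E')"
      using Suc.IH c' sg' conn'' cl' Kne tri' ed' by blast
    have "{(x,y). x \<in> V' \<and> y \<in> V' \<and> E' x y \<and> \<not>(x \<in> K \<and> y \<in> K)} =
          {(x,y). x \<in> V' \<and> y \<in> V' \<and> E x y \<and> \<not>(x \<in> K \<and> y \<in> K)}" unfolding V'_def E'_def by auto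
    then have ecq: "ec (\<lambda>x y. E' x y \<and> \<not>(x \<in> K \<and> y \<in> K)) V' = ec (\<lambda>x y. E x y \<and> \<not>(x \<in> K \<and> y \<in> K)) V'"
      unfolding ec_def by simp
    have ecr: "ec (\<lambda>x y. E x y \<and> \<not>(x \<in> K \<and> y \<in> K)) V = ec (\<lambda>x y. E x y \<and> \<not>(x \<in> K \<and> y \<in> K)) V'
       + 2 * dg (\<lambda>x y. E x y \<and> \<not>(x \<in> K \<and> y \<in> K)) V v"
      unfolding V'_def using ec_remove[OF fin, of v "\<lambda>x y. E x y \<and> \<not>(x \<in> K \<and> y \<in> K)"] v sg_sym[OF sg] sg_irr[OF sg]
      by blast
    have "{y \<in> V. E v y \<and> \<not>(v \<in> K \<and> y \<in> K)} = {y. E v y}" using v sg_V[OF sg] by auto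
    then have dgq: "dg (\<lambda>x y. E x y \<and> \<not>(x \<in> K \<and> y \<in> K)) V v = card {y. E v y}" unfolding dg_def by simp
    have ind: "\<forall>a b. E v a \<longrightarrow> E v b \<longrightarrow> \<not> E a b" using tri v by blast
    have db: "card {y. E v y} \<le> 1 + card {S \<in> holes V E. v \<in> S}"
      using deg_bound[OF sg _ ind ed conn'] v by blast
    have fh: "finite (holes V E)" using finite_holes[OF fin] .
    have "holes V E = {S \<in> holes V E. v \<notin> S} \<union> {S \<in> holes V E. v \<in> S}" by auto
    then have "card (holes V E) = card {S \<in> holes V E. v \<notin> S} + card {S \<in> holes V E. v \<in> S}"
      using fh by (metis (no_types, lifting) card_Un_disjoint disjoint_iff finite_Un mem_Collect_eq)
    moreover have "holes V' E' = {S \<in> holes V E. v \<notin> S}" using hr by auto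
    ultimately have hc: "card (holes V E) = card (holes V' E') + card {S \<in> holes V E. v \<in> S}" by simp
    have cV: "card V' = card V - 1" "card V \<ge> 1" using v fin unfolding V'_def
      by (auto simp: card_Diff_singleton Suc_leI card_gt_0_iff intro!: Suc_leI)
    show "ec (\<lambda>x y. E x y \<and> \<not>(x \<in> K \<and> y \<in> K)) V + 2 * card K \<le> 2 * card V + 2 * card (holes V E)"
      using IH ecq ecr dgq db hc cV by linarith
  qed
qed


definition fq :: "('a \<Rightarrow> 'a \<Rightarrow> bool) \<Rightarrow> 'a set \<Rightarrow> int" where
  "fq H R = int (ec H R) - 2 * int (card R)"

lemma fq_remove:
  assumes fin: "finite R" and vR: "v \<in> R" and sym: "\<And>x y. H x y \<Longrightarrow> H y x" and irr: "\<And>x. \<not> H x x"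
    and mn: "\<forall>u\<in>R. dg H R v \<le> dg H R u"
  shows "fq H (R - {v}) \<ge> min (fq H R) (-2)"
proof -
  define d where "d = dg H R v"
  have er: "ec H R = ec H (R - {v}) + 2 * d" using ec_remove[where H=H, OF fin vR sym irr] d_def by simp
  have cR: "card (R - {v}) = card R - 1" "card R \<ge> 1" using fin vR
    by (auto simp: card_Diff_singleton card_gt_0_iff intro!: Suc_leI)
  show ?thesis
  proof (cases "d \<le> 1")
    case True
    then show ?thesis unfolding fq_def using er cR by linarith
  next
    case False
    have "ec H R = (\<Sum>x\<in>R. dg H R x)" using ec_sum[OF fin] .
    moreover have "(\<Sum>x\<in>R. dg H R x) \<ge> card R * d" using mn d_def
      using sum_bounded_below[of R d "dg H R"] by (simp add: mult.commute)
    ultimately have e1: "ec H R \<ge> card R * d" by simp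
    have "{y \<in> R. H v y} \<subseteq> R - {v}" using irr by auto
    then have "d \<le> card R - 1" unfolding d_def dg_def using fin cR
      by (metis card_mono finite_Diff)
    then have "card R \<ge> 3" using False by simp
    have "int (card R) * int d \<le> int (ec H R)" using e1 by (metis of_nat_le_iff of_nat_mult)
    moreover have "(int d - 2) * (int (card R) - 2) \<ge> 0" using False \<open>card R \<ge> 3\<close> by simp
    ultimately have "int (ec H R) - 2 * int d - 2 * (int (card R) - 1) \<ge> -2"
      by (simp add: algebra_simps)
    then show ?thesis unfolding fq_def using er cR by simp
  qed
qed

lemma orderB:
  assumes fin: "finite R" and sym: "\<And>x y. H x y \<Longrightarrow> H y x" and irr: "\<And>x. \<not> H x x"
  shows "\<exists>xs. distinct xs \<and> set xs = R \<and> (\<forall>t. fq H (set (drop t xs)) \<ge> min (fq H R) (-2))"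
  using fin
proof (induction R rule: finite_remove_induct)
  case empty
  have "fq H {} = 0" unfolding fq_def ec_def by simp
  then show ?case by (intro exI[of _ "[]"]) auto
next
  case (remove A)
  obtain v where v: "v \<in> A" "\<forall>u\<in>A. dg H A v \<le> dg H A u"
  proof -
    have "finite (dg H A ` A)" "dg H A ` A \<noteq> {}" using remove.hyps by auto
    then have "Min (dg H A ` A) \<in> dg H A ` A" by (rule Min_in)
    then obtain v where "v \<in> A" "dg H A v = Min (dg H A ` A)" by auto
    moreover have "\<forall>u\<in>A. Min (dg H A ` A) \<le> dg H A u" using remove.hyps(1) by simp
    ultimately show ?thesis using that by auto
  qed
  obtain xs where xs: "distinct xs" "set xs = A - {v}" "\<forall>t. fq H (set (drop t xs)) \<ge> min (fq H (A - {v})) (-2)"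
    using remove.IH[OF v(1)] by blast
  have fr: "fq H (A - {v}) \<ge> min (fq H A) (-2)" using fq_remove[where H=H, OF remove.hyps(1) v(1) sym irr v(2)] .
  have "\<forall>t. fq H (set (drop t (v # xs))) \<ge> min (fq H A) (-2)"
  proof
    fix t show "fq H (set (drop t (v # xs))) \<ge> min (fq H A) (-2)"
    proof (cases t)
      case 0 then show ?thesis using xs(2) v(1) by (simp add: insert_absorb)
    next
      case (Suc t')
      have "min (fq H (A - {v})) (-2) \<le> fq H (set (drop t' xs))" using xs(3) by blast
      then show ?thesis using Suc fr by (auto simp: min_def split: if_splits)
    qed
  qed
  moreover have "distinct (v # xs)" "set (v # xs) = A" using xs v(1) by auto
  ultimately show ?case by blast
qed


lemma matching_aux:
  fixes \<mu> :: "'e \<Rightarrow> nat"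
  shows "\<forall>Ed. finite Ed \<longrightarrow> card Ed = n \<longrightarrow> (\<forall>t. card {e\<in>Ed. \<mu> e < t} \<le> t) \<longrightarrow>
    (\<exists>\<sigma>. inj_on \<sigma> Ed \<and> (\<forall>e\<in>Ed. \<sigma> e \<le> \<mu> e))"
proof (induction n)
  case 0
  then show ?case by auto
next
  case (Suc n)
  show ?case
  proof (intro allI impI)
    fix Ed :: "'e set"
    assume fin: "finite Ed" and c: "card Ed = Suc n" and cond: "\<forall>t. card {e\<in>Ed. \<mu> e < t} \<le> t"
    have ne: "Ed \<noteq> {}" using c by auto
    obtain e0 where e0: "e0 \<in> Ed" "\<forall>e\<in>Ed. \<mu> e \<le> \<mu> e0"
    proof -
      have "finite (\<mu> ` Ed)" "\<mu> ` Ed \<noteq> {}" using fin ne by auto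
      then have "Max (\<mu> ` Ed) \<in> \<mu> ` Ed" by (rule Max_in)
      then obtain e0 where "e0 \<in> Ed" "\<mu> e0 = Max (\<mu> ` Ed)" by auto
      moreover have "\<forall>e\<in>Ed. \<mu> e \<le> Max (\<mu> ` Ed)" using fin by simp
      ultimately show ?thesis using that by auto
    qed
    define Ed' where "Ed' = Ed - {e0}"
    have fin': "finite Ed'" using fin Ed'_def by simp
    have c': "card Ed' = n" using c e0(1) fin Ed'_def by simp
    have cond': "\<forall>t. card {e\<in>Ed'. \<mu> e < t} \<le> t"
    proof
      fix t
      have "card {e\<in>Ed'. \<mu> e < t} \<le> card {e\<in>Ed. \<mu> e < t}"
        using fin unfolding Ed'_def by (intro card_mono) auto
      then show "card {e\<in>Ed'. \<mu> e < t} \<le> t" using cond by (meson le_trans)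
    qed
    obtain \<sigma>' where s': "inj_on \<sigma>' Ed'" "\<forall>e\<in>Ed'. \<sigma>' e \<le> \<mu> e"
      using Suc.IH fin' c' cond' by blast
    define M where "M = \<mu> e0"
    have "{e\<in>Ed. \<mu> e < Suc M} = Ed" using e0(2) M_def by auto
    then have "card Ed \<le> Suc M" using cond by metis
    then have nM: "n \<le> M" using c by simp
    have sub: "\<sigma>' ` Ed' \<subseteq> {..M}" using s'(2) e0(2) M_def unfolding Ed'_def by (auto intro: le_trans)
    have "card (\<sigma>' ` Ed') = n" using card_image[OF s'(1)] c' by simp
    then have "card (\<sigma>' ` Ed') < card {..M}" using nM by simp
    have "{..M} - \<sigma>' ` Ed' \<noteq> {}" 
    proof
      assume "{..M} - \<sigma>' ` Ed' = {}"
      then have "{..M} \<subseteq> \<sigma>' ` Ed'" by blast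
      then have "card {..M} \<le> card (\<sigma>' ` Ed')" using fin' by (intro card_mono) auto
      then show False using \<open>card (\<sigma>' ` Ed') < card {..M}\<close> by simp
    qed
    then obtain s where s: "s \<le> M" "s \<notin> \<sigma>' ` Ed'" by auto
    define \<sigma> where "\<sigma> = \<sigma>'(e0 := s)"
    have "inj_on \<sigma> Ed'" using s'(1) unfolding \<sigma>_def Ed'_def by (simp add: inj_on_def)
    moreover have "\<sigma> e0 \<notin> \<sigma> ` (Ed' - {e0})" using s unfolding \<sigma>_def Ed'_def by auto
    ultimately have "inj_on \<sigma> (insert e0 Ed')" by simp
    moreover have "insert e0 Ed' = Ed" using e0(1) Ed'_def by auto
    moreover have "\<forall>e\<in>Ed. \<sigma> e \<le> \<mu> e" using s s'(2) M_def unfolding \<sigma>_def Ed'_def by auto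
    ultimately show "\<exists>\<sigma>. inj_on \<sigma> Ed \<and> (\<forall>e\<in>Ed. \<sigma> e \<le> \<mu> e)" by metis
  qed
qed

lemma matching:
  fixes \<mu> :: "'e \<Rightarrow> nat"
  assumes "finite Ed" "\<forall>t. card {e\<in>Ed. \<mu> e < t} \<le> t"
  shows "\<exists>\<sigma>. inj_on \<sigma> Ed \<and> (\<forall>e\<in>Ed. \<sigma> e \<le> \<mu> e)"
  using matching_aux assms by blast


lemma acyclic_rank:
  assumes "\<forall>(a,b)\<in>A. r b < (r a :: nat)"
  shows "acyclic A"
proof -
  have "\<And>x y. (x,y) \<in> A\<^sup>+ \<Longrightarrow> r y < r x"
  proof -
    fix x y assume "(x,y) \<in> A\<^sup>+"
    then show "r y < r x"
    proof (induction rule: trancl_induct)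
      case (base y) then show ?case using assms by blast
    next
      case (step y z) then show ?case using assms by fastforce
    qed
  qed
  then show ?thesis unfolding acyclic_def by blast
qed

lemma construct:
  fixes g :: "'a \<Rightarrow> 'b" and xs :: "'a list"
  assumes sg: "simple_graph V E" and cl: "is_clique V E K"
    and inj: "inj_on g V" and j1: "j1 \<notin> g ` V" and j2: "j2 \<notin> g ` V" and j12: "j1 \<noteq> j2"
    and dxs: "distinct xs" and sxs: "set xs = V"
    and cond: "\<forall>t. card {e \<in> {(i,j). i < j \<and> j < length xs \<and> E (xs!i) (xs!j) \<and> \<not>(xs!i \<in> K \<and> xs!j \<in> K)}. fst e < t} \<le> t"
  shows "\<exists>A. acyclic A \<and> is_competition_graph (insert j1 (insert j2 (g ` V))) A
             (\<lambda>u w. \<exists>a\<in>V. \<exists>b\<in>V. u = g a \<and> w = g b \<and> E a b) \<and> (\<forall>x\<in>K. (g x, j2) \<in> A)"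
proof -
  define n where "n = length xs"
  define Ed where "Ed = {(i,j). i < j \<and> j < n \<and> E (xs!i) (xs!j) \<and> \<not>(xs!i \<in> K \<and> xs!j \<in> K)}"
  have finEd: "finite Ed" unfolding Ed_def by (rule finite_subset[of _ "{..<n} \<times> {..<n}"]) auto
  obtain \<sigma> where s: "inj_on \<sigma> Ed" "\<forall>e\<in>Ed. \<sigma> e \<le> fst e"
    using matching[OF finEd, of fst] cond unfolding Ed_def n_def by blast
  define \<phi> where "\<phi> i = g (xs ! i)" for i
  have injphi: "inj_on \<phi> {..<n}"
  proof (rule inj_onI)
    fix i j assume i: "i \<in> {..<n}" and j: "j \<in> {..<n}" and e: "\<phi> i = \<phi> j"
    have "xs!i \<in> V" "xs!j \<in> V" using i j sxs n_def by auto
    then have "xs!i = xs!j" using e inj unfolding \<phi>_def inj_on_def by blast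
    then show "i = j" using dxs i j n_def nth_eq_iff_index_eq by auto
  qed
  have phiV: "\<And>i. i < n \<Longrightarrow> \<phi> i \<in> g ` V" using sxs n_def unfolding \<phi>_def by auto
  have gV: "\<And>a. a \<in> V \<Longrightarrow> \<exists>i<n. a = xs!i" using sxs n_def by (auto simp: in_set_conv_nth)
  define r where "r z = (if z \<in> g ` V then Suc (the_inv_into {..<n} \<phi> z) else 0)" for z
  have rphi: "\<And>i. i < n \<Longrightarrow> r (\<phi> i) = Suc i"
    using phiV the_inv_into_f_f[OF injphi] unfolding r_def by auto
  have rg: "\<And>a. a \<in> V \<Longrightarrow> r (g a) > 0" unfolding r_def by auto
  have rj: "r j1 = 0" "r j2 = 0" using j1 j2 unfolding r_def by auto
  define snk where "snk e = (if \<sigma> e = 0 then j1 else \<phi> (\<sigma> e - 1))" for e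
  have Ed_lt: "\<And>i j. (i,j) \<in> Ed \<Longrightarrow> i < j \<and> j < n" unfolding Ed_def by auto
  have sig_lt: "\<And>e. e \<in> Ed \<Longrightarrow> \<sigma> e - 1 < n" using s(2) Ed_lt by fastforce
  have rsnk: "\<And>e. e \<in> Ed \<Longrightarrow> r (snk e) = \<sigma> e"
    using rj rphi sig_lt unfolding snk_def by auto
  have snk_ne: "\<And>e. e \<in> Ed \<Longrightarrow> snk e \<noteq> j2" using j12 phiV sig_lt j2 unfolding snk_def by auto
  have snk_W: "\<And>e. e \<in> Ed \<Longrightarrow> snk e \<in> insert j1 (insert j2 (g ` V))"
    using phiV sig_lt unfolding snk_def by auto
  have snk_inj: "\<And>e e'. e \<in> Ed \<Longrightarrow> e' \<in> Ed \<Longrightarrow> snk e = snk e' \<Longrightarrow> e = e'"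
  proof -
    fix e e' assume e: "e \<in> Ed" and e': "e' \<in> Ed" and q: "snk e = snk e'"
    have "\<sigma> e = \<sigma> e'"
    proof (cases "\<sigma> e = 0")
      case True
      then have "snk e' = j1" using q unfolding snk_def by simp
      then have "\<sigma> e' = 0" using phiV[OF sig_lt[OF e']] j1 unfolding snk_def by (auto split: if_splits)
      then show ?thesis using True by simp
    next
      case False
      then have "snk e \<in> g ` V" using phiV[OF sig_lt[OF e]] unfolding snk_def by simp
      then have "\<sigma> e' \<noteq> 0" using q j1 unfolding snk_def by auto
      then have "\<phi> (\<sigma> e - 1) = \<phi> (\<sigma> e' - 1)" using q False unfolding snk_def by simp
      then have "\<sigma> e - 1 = \<sigma> e' - 1" using injphi sig_lt e e' unfolding inj_on_def by blast
      then show ?thesis using False \<open>\<sigma> e' \<noteq> 0\<close> by simp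
    qed
    then show "e = e'" using s(1) e e' unfolding inj_on_def by blast
  qed
  define A where "A = (\<lambda>x. (g x, j2)) ` K \<union> (\<lambda>e. (\<phi> (fst e), snk e)) ` Ed \<union> (\<lambda>e. (\<phi> (snd e), snk e)) ` Ed"
  define W where "W = insert j1 (insert j2 (g ` V))"
  have KV: "K \<subseteq> V" using cl unfolding is_clique_def by simp
  have acyc: "acyclic A"
  proof (rule acyclic_rank[where r = r])
    show "\<forall>(a,b)\<in>A. r b < r a"
    proof
      fix p assume "p \<in> A"
      then consider (k) x where "x \<in> K" "p = (g x, j2)"
        | (f) e where "e \<in> Ed" "p = (\<phi> (fst e), snk e)"
        | (t) e where "e \<in> Ed" "p = (\<phi> (snd e), snk e)"
        unfolding A_def by blast
      then show "case p of (a, b) \<Rightarrow> r b < r a"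
      proof cases
        case k then show ?thesis using rj rg KV by auto
      next
        case f
        obtain i j where ij: "e = (i,j)" by (cases e)
        have "\<sigma> e \<le> i" "i < j" "j < n" using s(2) f(1) ij Ed_lt by auto
        then show ?thesis using f rsnk rphi ij by auto
      next
        case t
        obtain i j where ij: "e = (i,j)" by (cases e)
        have "\<sigma> e \<le> i" "i < j" "j < n" using s(2) t(1) ij Ed_lt by auto
        then show ?thesis using t rsnk rphi ij by auto
      qed
    qed
  qed
  have arcs: "\<And>u z. (u,z) \<in> A \<Longrightarrow> (z = j2 \<and> (\<exists>x\<in>K. u = g x)) \<or>
      (\<exists>e\<in>Ed. z = snk e \<and> (u = \<phi> (fst e) \<or> u = \<phi> (snd e)))"
    unfolding A_def by auto
  have AW: "A \<subseteq> W \<times> W"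
  proof
    fix p assume "p \<in> A"
    then obtain u z where p: "p = (u,z)" "(u,z) \<in> A" by (cases p) auto
    from arcs[OF p(2)] show "p \<in> W \<times> W"
    proof
      assume "z = j2 \<and> (\<exists>x\<in>K. u = g x)" then show ?thesis using p KV unfolding W_def by auto
    next
      assume "\<exists>e\<in>Ed. z = snk e \<and> (u = \<phi> (fst e) \<or> u = \<phi> (snd e))"
      then obtain e where e: "e \<in> Ed" "z = snk e" "u = \<phi> (fst e) \<or> u = \<phi> (snd e)" by blast
      have "fst e < n" "snd e < n" using Ed_lt[of "fst e" "snd e"] e(1) by auto
      then have "u \<in> g ` V" using e(3) phiV by auto
      then show ?thesis using p snk_W[OF e(1)] e(2) unfolding W_def by auto
    qed
  qed
  have Esym: "\<And>a b. E a b \<Longrightarrow> E b a" using sg_sym[OF sg] .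
  have comp: "\<forall>u\<in>W. \<forall>w\<in>W. u \<noteq> w \<longrightarrow>
      ((\<exists>a\<in>V. \<exists>b\<in>V. u = g a \<and> w = g b \<and> E a b) \<longleftrightarrow> (\<exists>z\<in>W. (u, z) \<in> A \<and> (w, z) \<in> A))"
  proof (intro ballI impI iffI)
    fix u w assume uW: "u \<in> W" and wW: "w \<in> W" and uw: "u \<noteq> w"
    assume "\<exists>a\<in>V. \<exists>b\<in>V. u = g a \<and> w = g b \<and> E a b"
    then obtain a b where ab: "a \<in> V" "b \<in> V" "u = g a" "w = g b" "E a b" by blast
    show "\<exists>z\<in>W. (u, z) \<in> A \<and> (w, z) \<in> A"
    proof (cases "a \<in> K \<and> b \<in> K")
      case True
      then show ?thesis using ab unfolding A_def W_def by auto
    next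
      case False
      obtain i where i: "i < n" "a = xs!i" using gV ab(1) by blast
      obtain j where j: "j < n" "b = xs!j" using gV ab(2) by blast
      have "i \<noteq> j" using uw ab i j by auto
      then show ?thesis
      proof (cases "i < j")
        case True
        have c1: "E (xs!i) (xs!j)" "\<not>(xs!i \<in> K \<and> xs!j \<in> K)" using ab i j False by auto
        have eij: "(i,j) \<in> Ed" unfolding Ed_def using True j(1) c1 by simp
        have "(\<phi> i, snk (i,j)) \<in> A" "(\<phi> j, snk (i,j)) \<in> A" unfolding A_def using eij by force+
        moreover have "u = \<phi> i" "w = \<phi> j" using ab i j unfolding \<phi>_def by auto
        ultimately show ?thesis using snk_W[OF eij] unfolding W_def by blast
      next
        case False2: False
        have c1: "E (xs!j) (xs!i)" "\<not>(xs!j \<in> K \<and> xs!i \<in> K)" using ab i j False Esym by auto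
        have eij: "(j,i) \<in> Ed" unfolding Ed_def using False2 \<open>i \<noteq> j\<close> i(1) c1 by simp
        have "(\<phi> j, snk (j,i)) \<in> A" "(\<phi> i, snk (j,i)) \<in> A" unfolding A_def using eij by force+
        moreover have "u = \<phi> i" "w = \<phi> j" using ab i j unfolding \<phi>_def by auto
        ultimately show ?thesis using snk_W[OF eij] unfolding W_def by blast
      qed
    qed
  next
    fix u w assume uW: "u \<in> W" and wW: "w \<in> W" and uw: "u \<noteq> w"
    assume "\<exists>z\<in>W. (u, z) \<in> A \<and> (w, z) \<in> A"
    then obtain z where z: "(u,z) \<in> A" "(w,z) \<in> A" by blast
    show "\<exists>a\<in>V. \<exists>b\<in>V. u = g a \<and> w = g b \<and> E a b"
    proof (cases "z = j2")
      case True
      then have "\<exists>x\<in>K. u = g x" "\<exists>x\<in>K. w = g x" using arcs[OF z(1)] arcs[OF z(2)] snk_ne by auto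
      then obtain x y where xy: "x \<in> K" "y \<in> K" "u = g x" "w = g y" by blast
      then have "x \<noteq> y" using uw by auto
      then have "E x y" using cl xy unfolding is_clique_def by blast
      then show ?thesis using xy KV by blast
    next
      case False
      obtain e where e: "e \<in> Ed" "z = snk e" "u = \<phi> (fst e) \<or> u = \<phi> (snd e)" using arcs[OF z(1)] False by blast
      obtain e' where e': "e' \<in> Ed" "z = snk e'" "w = \<phi> (fst e') \<or> w = \<phi> (snd e')" using arcs[OF z(2)] False by blast
      have "e = e'" using snk_inj e e' by simp
      obtain i j where ij: "e = (i,j)" by (cases e)
      have ijE: "i < j" "j < n" "E (xs!i) (xs!j)" using e(1) ij unfolding Ed_def by auto
      have V2: "xs!i \<in> V" "xs!j \<in> V" using ijE sxs n_def by auto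
      have "(u = \<phi> i \<and> w = \<phi> j) \<or> (u = \<phi> j \<and> w = \<phi> i)" using e(3) e'(3) \<open>e = e'\<close> ij uw by auto
      then show ?thesis using V2 ijE Esym unfolding \<phi>_def by blast
    qed
  qed
  have "is_competition_graph W A (\<lambda>u w. \<exists>a\<in>V. \<exists>b\<in>V. u = g a \<and> w = g b \<and> E a b)"
    unfolding is_competition_graph_def using AW comp by blast
  moreover have "\<forall>x\<in>K. (g x, j2) \<in> A" unfolding A_def by blast
  ultimately show ?thesis using acyc unfolding W_def by blast
qed


lemma in_set_drop_iff: "x \<in> set (drop t xs) \<longleftrightarrow> (\<exists>i. t \<le> i \<and> i < length xs \<and> x = xs!i)"
proof
  assume "x \<in> set (drop t xs)"
  then obtain k where "k < length (drop t xs)" "drop t xs ! k = x" by (auto simp: in_set_conv_nth)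
  then show "\<exists>i. t \<le> i \<and> i < length xs \<and> x = xs!i" by (intro exI[of _ "t + k"]) auto
next
  assume "\<exists>i. t \<le> i \<and> i < length xs \<and> x = xs!i"
  then obtain i where i: "t \<le> i" "i < length xs" "x = xs!i" by blast
  then have "drop t xs ! (i - t) = x" "i - t < length (drop t xs)" by auto
  then show "x \<in> set (drop t xs)" by (metis nth_mem)
qed

lemma ec_index:
  assumes dxs: "distinct xs"
  shows "ec H (set (drop t xs)) = card {(i,j). t \<le> i \<and> i < length xs \<and> t \<le> j \<and> j < length xs \<and> H (xs!i) (xs!j)}"
proof -
  let ?P = "{(i,j). t \<le> i \<and> i < length xs \<and> t \<le> j \<and> j < length xs \<and> H (xs!i) (xs!j)}"
  let ?f = "\<lambda>(i,j). (xs!i, xs!j)"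
  have inj: "inj_on ?f ?P" using dxs by (auto simp: inj_on_def nth_eq_iff_index_eq)
  have "?f ` ?P = {(x,y). x \<in> set (drop t xs) \<and> y \<in> set (drop t xs) \<and> H x y}"
    unfolding in_set_drop_iff by auto
  then show ?thesis unfolding ec_def using card_image[OF inj] by simp
qed

lemma cond_from_fq:
  assumes dxs: "distinct xs" and sym: "\<And>x y. H x y \<Longrightarrow> H y x" and irr: "\<And>x. \<not> H x x"
    and fqc: "\<forall>t. fq H (set (drop t xs)) \<ge> fq H (set xs)"
  shows "\<forall>t. card {e \<in> {(i,j). i < j \<and> j < length xs \<and> H (xs!i) (xs!j)}. fst e < t} \<le> t"
proof
  fix t
  define n where "n = length xs"
  define P where "P = {(i,j). 0 \<le> i \<and> i < n \<and> 0 \<le> j \<and> j < n \<and> H (xs!i) (xs!j)}"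
  define Pt where "Pt = {(i,j). t \<le> i \<and> i < n \<and> t \<le> j \<and> j < n \<and> H (xs!i) (xs!j)}"
  define C where "C = {e \<in> {(i,j). i < j \<and> j < n \<and> H (xs!i) (xs!j)}. fst e < t}"
  have e0: "ec H (set xs) = card P" using ec_index[OF dxs, of H 0] unfolding P_def n_def by simp
  have et: "ec H (set (drop t xs)) = card Pt" using ec_index[OF dxs, of H t] unfolding Pt_def n_def by simp
  have cs: "card (set (drop t xs)) = n - t" "card (set xs) = n"
    using dxs distinct_card[of "drop t xs"] distinct_card[of xs] n_def by auto
  have finP: "finite P" unfolding P_def by (rule finite_subset[of _ "{..<n} \<times> {..<n}"]) auto
  have sub: "Pt \<subseteq> P" unfolding P_def Pt_def by auto
  have diff: "P - Pt = C \<union> prod.swap ` C"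
  proof
    show "P - Pt \<subseteq> C \<union> prod.swap ` C"
    proof
      fix p assume p: "p \<in> P - Pt"
      obtain i j where ij: "p = (i,j)" by (cases p)
      have h: "i < n" "j < n" "H (xs!i) (xs!j)" "i < t \<or> j < t" using p ij unfolding P_def Pt_def by auto
      have "i \<noteq> j" using h(3) irr by auto
      show "p \<in> C \<union> prod.swap ` C"
      proof (cases "i < j")
        case True then have "p \<in> C" using h ij unfolding C_def by auto
        then show ?thesis by blast
      next
        case False
        then have "(j,i) \<in> C" using h \<open>i \<noteq> j\<close> sym unfolding C_def by auto
        then have "prod.swap (j,i) \<in> prod.swap ` C" by blast
        then show ?thesis using ij by simp
      qed
    qed
  next
    show "C \<union> prod.swap ` C \<subseteq> P - Pt"
      unfolding C_def P_def Pt_def using sym by auto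
  qed
  have finC: "finite C" unfolding C_def by (rule finite_subset[of _ "{..<n} \<times> {..<n}"]) auto
  have "C \<inter> prod.swap ` C = {}" unfolding C_def by auto
  then have "card (C \<union> prod.swap ` C) = 2 * card C"
    using finC card_Un_disjoint[of C "prod.swap ` C"] card_image[of prod.swap C] by simp
  moreover have "card (P - Pt) = card P - card Pt" using card_Diff_subset[OF _ sub] finP sub
    by (meson finite_subset)
  moreover have "card Pt \<le> card P" using card_mono[OF finP sub] .
  moreover have "fq H (set (drop t xs)) \<ge> fq H (set xs)" using fqc by blast
  ultimately have "2 * card C \<le> 2 * t" unfolding fq_def using e0 et cs diff by auto
  then show "card {e \<in> {(i,j). i < j \<and> j < length xs \<and> H (xs!i) (xs!j)}. fst e < t} \<le> t"
    unfolding C_def n_def by simp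
qed


lemma clique_card_le:
  assumes fin: "finite V" and c: "is_clique V E T"
  shows "card T \<le> clique_number V E"
proof -
  have "{card K | K. is_clique V E K} \<subseteq> card ` Pow V" unfolding is_clique_def by auto
  moreover have "finite (card ` Pow V)" using fin by simp
  ultimately have "finite {card K | K. is_clique V E K}" by (rule finite_subset)
  then show ?thesis unfolding clique_number_def using c by (auto intro: Max_ge)
qed

lemma triangle_in_K:
  assumes sg: "simple_graph V E" and nm: "card (nonedge_maximal_cliques V E) \<le> 1"
    and cl: "is_clique V E K" and cK: "card K = clique_number V E"
  shows "\<forall>x y z. E x y \<longrightarrow> E y z \<longrightarrow> E x z \<longrightarrow> x \<in> K"
proof (intro allI impI)
  fix x y z assume xy: "E x y" and yz: "E y z" and xz: "E x z"
  have fin: "finite V" using sg unfolding simple_graph_def by simp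
  define T where "T = {x,y,z}"
  have d: "x \<noteq> y" "y \<noteq> z" "x \<noteq> z" using xy yz xz sg_irr[OF sg] by auto
  have cT: "card T = 3" using d unfolding T_def by simp
  have clT: "is_clique V E T" unfolding is_clique_def T_def
    using xy yz xz sg_V[OF sg] sg_sym[OF sg] by auto
  have KV: "K \<subseteq> V" using cl unfolding is_clique_def by simp
  have finK: "finite K" using KV fin by (rule finite_subset)
  have c3: "card K \<ge> 3" using clique_card_le[OF fin clT] cT cK by simp
  have maxK: "maximal_clique V E K" unfolding maximal_clique_def
  proof (intro conjI allI impI)
    fix K' assume "is_clique V E K' \<and> K \<subseteq> K'"
    then have K': "is_clique V E K'" "K \<subseteq> K'" by auto
    have "finite K'" using K' fin unfolding is_clique_def by (auto intro: finite_subset)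
    moreover have "card K' \<le> card K" using clique_card_le[OF fin K'(1)] cK by simp
    ultimately show "K' = K" using K'(2) by (metis card_seteq)
  qed (rule cl)
  let ?C = "{M. is_clique V E M \<and> T \<subseteq> M}"
  have finC: "finite ?C" using fin unfolding is_clique_def by (auto intro: finite_subset[of _ "Pow V"])
  have neC: "?C \<noteq> {}" using clT by blast
  obtain M where M: "M \<in> ?C" "\<forall>M'\<in>?C. card M' \<le> card M"
  proof -
    have "finite (card ` ?C)" "card ` ?C \<noteq> {}" using finC neC by auto
    then have "Max (card ` ?C) \<in> card ` ?C" by (rule Max_in)
    then obtain M where "M \<in> ?C" "card M = Max (card ` ?C)" by auto
    moreover have "\<forall>M'\<in>?C. card M' \<le> Max (card ` ?C)" using finC by simp
    ultimately show ?thesis using that by auto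
  qed
  have finM: "finite M" using M(1) fin unfolding is_clique_def by (auto intro: finite_subset)
  have maxM: "maximal_clique V E M" unfolding maximal_clique_def
  proof (intro conjI allI impI)
    show "is_clique V E M" using M(1) by simp
    fix K' assume "is_clique V E K' \<and> M \<subseteq> K'"
    then have K': "is_clique V E K'" "M \<subseteq> K'" by auto
    have "finite K'" using K' fin unfolding is_clique_def by (auto intro: finite_subset)
    moreover have "card K' \<le> card M" using M K' by auto
    ultimately show "K' = M" using K'(2) by (metis card_seteq)
  qed
  have "card M \<ge> 3" using card_mono[OF finM, of T] M(1) cT by auto
  then have Mn: "M \<in> nonedge_maximal_cliques V E" using maxM unfolding nonedge_maximal_cliques_def by simp
  have Kn: "K \<in> nonedge_maximal_cliques V E" using maxK c3 unfolding nonedge_maximal_cliques_def by simp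
  have "finite (nonedge_maximal_cliques V E)"
    using fin unfolding nonedge_maximal_cliques_def maximal_clique_def is_clique_def
    by (auto intro: finite_subset[of _ "Pow V"])
  then have "M = K" using nm Mn Kn by (metis card_le_Suc0_iff_eq One_nat_def)
  then show "x \<in> K" using M(1) unfolding T_def by auto
qed

theorem theorem1:
  fixes V :: "'a set" and E :: "'a \<Rightarrow> 'a \<Rightarrow> bool" and h :: nat and K :: "'a set"
    and i1 i2 :: 'a
  assumes "simple_graph V E"
    and "connected_graph V E"
    and "card (holes V E) = h"
    and "\<forall>S\<in>holes V E. \<forall>T\<in>holes V E. S \<noteq> T \<longrightarrow> edge_disjoint E S T"
    and "card (nonedge_maximal_cliques V E) \<le> 1"
    and "clique_number V E = h + 1"
    and "is_clique V E K" and "card K = clique_number V E"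
    and "i1 \<notin> V" and "i2 \<notin> V" and "i1 \<noteq> i2"
  shows "(\<exists>A. acyclic A \<and>
           is_competition_graph (insert i1 (insert i2 V)) A (\<lambda>x y. x \<in> V \<and> y \<in> V \<and> E x y) \<and>
           (\<forall>x\<in>K. (x, i2) \<in> A))
         \<and> competition_number V E \<le> 2"
proof -
  note sg = assms(1)
  have fin: "finite V" using sg unfolding simple_graph_def by simp
  have conn: "\<forall>x\<in>V. \<forall>y\<in>V. E\<^sup>*\<^sup>* x y" using assms(2) unfolding connected_graph_def by simp
  have tri: "\<forall>x y z. E x y \<longrightarrow> E y z \<longrightarrow> E x z \<longrightarrow> x \<in> K"
    using triangle_in_K[OF sg assms(5) assms(7) assms(8)] .
  have cK: "card K = h + 1" using assms(6,8) by simp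
  have Kne: "K \<noteq> {}" using cK by auto
  define H where "H = (\<lambda>x y. E x y \<and> \<not>(x \<in> K \<and> y \<in> K))"
  have cA: "ec H V + 2 * card K \<le> 2 * card V + 2 * card (holes V E)"
    using countA[of K "card (V - K)"] sg conn assms(7) Kne tri assms(4) unfolding H_def by blast
  then have ecV: "ec H V + 2 \<le> 2 * card V" using cK assms(3) by simp
  have Hsym: "\<And>x y. H x y \<Longrightarrow> H y x" unfolding H_def using sg_sym[OF sg] by blast
  have Hirr: "\<And>x. \<not> H x x" unfolding H_def using sg_irr[OF sg] by blast
  obtain xs where xs: "distinct xs" "set xs = V" "\<forall>t. fq H (set (drop t xs)) \<ge> min (fq H V) (-2)"
    using orderB[where H=H, OF fin Hsym Hirr] by blast
  have "fq H V \<le> -2" unfolding fq_def using ecV by simp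
  then have fqc: "\<forall>t. fq H (set (drop t xs)) \<ge> fq H (set xs)" using xs(2,3) by (simp add: min_def)
  have cond0: "\<forall>t. card {e \<in> {(i,j). i < j \<and> j < length xs \<and> H (xs!i) (xs!j)}. fst e < t} \<le> t"
    using cond_from_fq[where H=H, OF xs(1) Hsym Hirr fqc] .
  have cond: "\<forall>t. card {e \<in> {(i,j). i < j \<and> j < length xs \<and> E (xs!i) (xs!j) \<and> \<not>(xs!i \<in> K \<and> xs!j \<in> K)}. fst e < t} \<le> t"
    using cond0 unfolding H_def by simp
  obtain A where A: "acyclic A" "is_competition_graph (insert i1 (insert i2 (id ` V))) A
             (\<lambda>u w. \<exists>a\<in>V. \<exists>b\<in>V. u = id a \<and> w = id b \<and> E a b)" "\<forall>x\<in>K. (id x, i2) \<in> A"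
    using construct[OF sg assms(7), of id i1 i2 xs] assms(9,10,11) xs(1,2) cond by auto
  have F1: "(\<lambda>u w. \<exists>a\<in>V. \<exists>b\<in>V. u = id a \<and> w = id b \<and> E a b) = (\<lambda>x y. x \<in> V \<and> y \<in> V \<and> E x y)"
    by auto
  have part1: "\<exists>A. acyclic A \<and>
           is_competition_graph (insert i1 (insert i2 V)) A (\<lambda>x y. x \<in> V \<and> y \<in> V \<and> E x y) \<and>
           (\<forall>x\<in>K. (x, i2) \<in> A)" using A F1 by auto
  obtain A' :: "(('a + nat) \<times> ('a + nat)) set" where A': "acyclic A'"
    "is_competition_graph (insert (Inr 0) (insert (Inr 1) (Inl ` V))) A'
             (\<lambda>u w. \<exists>a\<in>V. \<exists>b\<in>V. u = Inl a \<and> w = Inl b \<and> E a b)"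
  proof -
    have "inj_on (Inl :: 'a \<Rightarrow> 'a + nat) V" by simp
    moreover have "(Inr 0 :: 'a + nat) \<notin> Inl ` V" "(Inr 1 :: 'a + nat) \<notin> Inl ` V" "(Inr 0 :: 'a + nat) \<noteq> Inr 1" by auto
    ultimately have "\<exists>A. acyclic A \<and> is_competition_graph (insert (Inr 0) (insert (Inr 1) (Inl ` V))) A
             (\<lambda>u w. \<exists>a\<in>V. \<exists>b\<in>V. u = Inl a \<and> w = Inl b \<and> E a b) \<and> (\<forall>x\<in>K. (Inl x, (Inr 1 :: 'a + nat)) \<in> A)"
      by (rule construct[OF sg assms(7) _ _ _ _ xs(1,2) cond])
    then show ?thesis using that by blast
  qed
  have W2: "insert (Inr 0) (insert (Inr 1) (Inl ` V)) = (Inl ` V \<union> Inr ` {..<2::nat} :: ('a + nat) set)"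
    by (auto simp: lessThan_def less_2_cases_iff)
  have F2: "(\<lambda>(u::'a + nat) (w::'a + nat). \<exists>a\<in>V. \<exists>b\<in>V. u = Inl a \<and> w = Inl b \<and> E a b) =
      (\<lambda>(x::'a + nat) (y::'a + nat). case (x, y) of (Inl a, Inl b) \<Rightarrow> E a b | _ \<Rightarrow> False)"
  proof (intro ext)
    fix x y :: "'a + nat"
    show "(\<exists>a\<in>V. \<exists>b\<in>V. x = Inl a \<and> y = Inl b \<and> E a b) =
      (case (x, y) of (Inl a, Inl b) \<Rightarrow> E a b | _ \<Rightarrow> False)"
      using sg_V[OF sg] by (cases x; cases y) auto
  qed
  have "\<exists>A :: (('a + nat) \<times> ('a + nat)) set. acyclic A \<and>
     is_competition_graph (Inl ` V \<union> Inr ` {..<2}) A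
       (\<lambda>x y. case (x, y) of (Inl a, Inl b) \<Rightarrow> E a b | _ \<Rightarrow> False)"
  proof (intro exI conjI)
    show "acyclic A'" using A'(1) .
    show "is_competition_graph (Inl ` V \<union> Inr ` {..<2}) A'
       (\<lambda>x y. case (x, y) of (Inl a, Inl b) \<Rightarrow> E a b | _ \<Rightarrow> False)"
      using A'(2) unfolding W2 F2 .
  qed
  then have "competition_number V E \<le> 2" unfolding competition_number_def by (rule Least_le)
  then show ?thesis using part1 by blast
qed

end
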